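(* For any graph $G$ and any integer $d\geq 2$, the pair $(BI_{d+1}(G),BI_d(G))$ is $(d-2)$-connected.
   Context: All graphs are finite and simple; $\alpha(G)$ is the independence number and $G[S]$ the induced subgraph on $S$. $BI_d(G)=\{\sigma\subseteq V(G):\ \alpha(G[\sigma])<d\}$; $BI_d(G)$ is a subcomplex of $BI_{d+1}(G)$. A pair $(X,A)$ is $m$-connected if $\pi_0(A)\to\pi_0(X)$ is surjective and $\pi_i(X,A)=0$ for $1\le i\le m$. *)

theory Defs
  imports "HOL-Analysis.Analysis"
begin

definition simple_graph :: "'n set \<Rightarrow> ('n \<Rightarrow> 'n \<Rightarrow> bool) \<Rightarrow> bool" where
  "simple_graph V E \<longleftrightarrow> finite V \<and> (\<forall>x y. E x y \<longrightarrow> x \<in> V \<and> y \<in> V)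
     \<and> (\<forall>x y. E x y \<longrightarrow> E y x) \<and> (\<forall>x. \<not> E x x)"

definition indep_set :: "('n \<Rightarrow> 'n \<Rightarrow> bool) \<Rightarrow> 'n set \<Rightarrow> bool" where
  "indep_set E S \<longleftrightarrow> (\<forall>x\<in>S. \<forall>y\<in>S. \<not> E x y)"

definition indep_number :: "('n \<Rightarrow> 'n \<Rightarrow> bool) \<Rightarrow> 'n set \<Rightarrow> nat" where
  "indep_number E \<sigma> = Max {card S | S. S \<subseteq> \<sigma> \<and> indep_set E S}"

definition BI :: "nat \<Rightarrow> 'n set \<Rightarrow> ('n \<Rightarrow> 'n \<Rightarrow> bool) \<Rightarrow> 'n set set" where
  "BI d V E = {\<sigma>. \<sigma> \<subseteq> V \<and> indep_number E \<sigma> < d}"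

definition realization :: "('n::finite) set set \<Rightarrow> (real ^ 'n) set" where
  "realization K = (\<Union>\<sigma>\<in>K. convex hull ((\<lambda>v. axis v 1) ` \<sigma>))"

definition ndisc :: "nat \<Rightarrow> (nat \<Rightarrow> real) topology" where
  "ndisc i = subtopology (Euclidean_space i) {x. (\<Sum>k<i. x k ^ 2) \<le> 1}"

definition disc_base :: "nat \<Rightarrow> real" where
  "disc_base = (\<lambda>k. if k = 0 then 1 else 0)"

text \<open>pi_i(X,A,x0) is trivial (i >= 1): every map of triples (D^i,S^(i-1),s0) -> (X,A,x0)
  is homotopic, through maps of triples, to the constant map.\<close>
definition rel_homotopy_trivial ::
  "nat \<Rightarrow> 'a::topological_space set \<Rightarrow> 'a set \<Rightarrow> 'a \<Rightarrow> bool" where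
  "rel_homotopy_trivial i X A x0 \<longleftrightarrow>
     (\<forall>f. continuous_map (ndisc i) (top_of_set X) f
          \<and> f ` topspace (nsphere (i - 1)) \<subseteq> A \<and> f disc_base = x0 \<longrightarrow>
        homotopic_with (\<lambda>h. h ` topspace (nsphere (i - 1)) \<subseteq> A \<and> h disc_base = x0)
          (ndisc i) (top_of_set X) f (\<lambda>_. x0))"

definition pair_connected :: "nat \<Rightarrow> 'a::topological_space set \<Rightarrow> 'a set \<Rightarrow> bool" where
  "pair_connected m X A \<longleftrightarrow> A \<subseteq> X
     \<and> (\<forall>x\<in>X. \<exists>a\<in>A. path_component X x a)
     \<and> (\<forall>i. 1 \<le> i \<and> i \<le> m \<longrightarrow> (\<forall>x0\<in>A. rel_homotopy_trivial i X A x0))"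

end

theory Submission
  imports Defs
begin

lemma sum_axis_comp:
  fixes \<sigma> :: "('n::finite) set"
  shows "(\<Sum>v\<in>\<sigma>. c v *\<^sub>R (axis v 1 :: real^'n)) $ w = (if w \<in> \<sigma> then c w else 0)"
  by (simp add: sum_component axis_def if_distrib cong: if_cong) 

lemma hull_char:
  fixes \<sigma> :: "('n::finite) set"
  shows "convex hull ((\<lambda>v. axis v 1 :: real^'n) ` \<sigma>) =
     {y. (\<forall>v. 0 \<le> y$v) \<and> (\<forall>v. v \<notin> \<sigma> \<longrightarrow> y$v = 0) \<and> sum (\<lambda>v. y$v) UNIV = 1}"
proof -
  have inj: "inj_on (\<lambda>v. axis v 1 :: real^'n) \<sigma>"
    by (auto simp: inj_on_def axis_eq_axis)
  have eq: "(\<Sum>x\<in>(\<lambda>v. axis v 1) ` \<sigma>. u x *\<^sub>R x) = (\<Sum>v\<in>\<sigma>. u (axis v 1) *\<^sub>R (axis v 1 :: real^'n))"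
       "sum u ((\<lambda>v. axis v 1 :: real^'n) ` \<sigma>) = (\<Sum>v\<in>\<sigma>. u (axis v 1))" for u
    by (simp_all add: sum.reindex[OF inj])
  show ?thesis
  proof (rule set_eqI, rule iffI)
    fix y assume "y \<in> convex hull ((\<lambda>v. axis v 1 :: real^'n) ` \<sigma>)"
    then obtain u where u: "\<forall>x\<in>(\<lambda>v. axis v 1) ` \<sigma>. 0 \<le> u x" "sum u ((\<lambda>v. axis v 1 :: real^'n) ` \<sigma>) = 1"
      "(\<Sum>x\<in>(\<lambda>v. axis v 1) ` \<sigma>. u x *\<^sub>R x) = y"
      by (auto simp: convex_hull_finite)
    have yc: "y $ w = (if w \<in> \<sigma> then u (axis w 1) else 0)" for w
      using u(3) sum_axis_comp[of "\<lambda>v. u (axis v 1)" \<sigma> w] by (simp add: eq)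
    have "sum (\<lambda>v. y$v) UNIV = sum (\<lambda>v. y$v) \<sigma>"
      by (rule sum.mono_neutral_right) (auto simp: yc)
    also have "\<dots> = 1" using u(2) by (simp add: eq yc)
    finally show "y \<in> {y. (\<forall>v. 0 \<le> y$v) \<and> (\<forall>v. v \<notin> \<sigma> \<longrightarrow> y$v = 0) \<and> sum (\<lambda>v. y$v) UNIV = 1}"
      using u(1) by (auto simp: yc)
  next
    fix y assume y: "y \<in> {y. (\<forall>v. 0 \<le> y$v) \<and> (\<forall>v. v \<notin> \<sigma> \<longrightarrow> y$v = (0::real)) \<and> sum (\<lambda>v. y$v) UNIV = 1}"
    define u where "u = (\<lambda>x::real^'n. x \<bullet> y)"
    have uax: "u (axis v 1) = y $ v" for v by (simp add: u_def inner_axis')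
    have "(\<Sum>v\<in>\<sigma>. y $ v) = sum (\<lambda>v. y$v) UNIV"
      by (rule sum.mono_neutral_left) (use y in auto)
    moreover have "(\<Sum>v\<in>\<sigma>. y $ v *\<^sub>R (axis v 1 :: real^'n)) = y"
      using y sum_axis_comp[of "\<lambda>v. y $ v" \<sigma>] by (auto simp: vec_eq_iff)
    ultimately show "y \<in> convex hull ((\<lambda>v. axis v 1 :: real^'n) ` \<sigma>)"
      using y unfolding convex_hull_finite[OF finite_imageI[OF finite]]
      by (intro CollectI exI[of _ u]) (auto simp: eq uax)
  qed
qed

lemma not_aff_dep: "\<not> affine_dependent ((\<lambda>v. axis v 1 :: real^'n::finite) ` \<sigma>)"
proof -
  have "(\<lambda>v. axis v 1 :: real^'n::finite) ` \<sigma> \<subseteq> Basis"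
    by auto
  then have "independent ((\<lambda>v. axis v 1 :: real^'n::finite) ` \<sigma>)"
    using independent_Basis independent_mono by blast
  then show ?thesis using affine_dependent_imp_dependent by blast
qed

lemma relint_char:
  fixes \<sigma> :: "('n::finite) set"
  shows "rel_interior (convex hull ((\<lambda>v. axis v 1 :: real^'n) ` \<sigma>)) =
     {y. (\<forall>v. 0 \<le> y$v) \<and> (\<forall>v. v \<notin> \<sigma> \<longrightarrow> y$v = 0) \<and> sum (\<lambda>v. y$v) UNIV = 1 \<and> (\<forall>v\<in>\<sigma>. 0 < y$v)}"
proof -
  have inj: "inj_on (\<lambda>v. axis v 1 :: real^'n) \<sigma>"
    by (auto simp: inj_on_def axis_eq_axis)
  have eq: "(\<Sum>x\<in>(\<lambda>v. axis v 1) ` \<sigma>. u x *\<^sub>R x) = (\<Sum>v\<in>\<sigma>. u (axis v 1) *\<^sub>R (axis v 1 :: real^'n))"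
       "sum u ((\<lambda>v. axis v 1 :: real^'n) ` \<sigma>) = (\<Sum>v\<in>\<sigma>. u (axis v 1))" for u
    by (simp_all add: sum.reindex[OF inj])
  show ?thesis
  proof (rule set_eqI, rule iffI)
    fix y assume "y \<in> rel_interior (convex hull ((\<lambda>v. axis v 1 :: real^'n) ` \<sigma>))"
    then obtain u where u: "\<forall>x\<in>(\<lambda>v. axis v 1) ` \<sigma>. 0 < u x" "sum u ((\<lambda>v. axis v 1 :: real^'n) ` \<sigma>) = 1"
      "(\<Sum>x\<in>(\<lambda>v. axis v 1) ` \<sigma>. u x *\<^sub>R x) = y"
      by (auto simp: rel_interior_convex_hull_explicit[OF not_aff_dep])
    have yc: "y $ w = (if w \<in> \<sigma> then u (axis w 1) else 0)" for w
      using u(3) sum_axis_comp[of "\<lambda>v. u (axis v 1)" \<sigma> w] by (simp add: eq)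
    have "sum (\<lambda>v. y$v) UNIV = sum (\<lambda>v. y$v) \<sigma>"
      by (rule sum.mono_neutral_right) (auto simp: yc)
    also have "\<dots> = 1" using u(2) by (simp add: eq yc)
    finally show "y \<in> {y. (\<forall>v. 0 \<le> y$v) \<and> (\<forall>v. v \<notin> \<sigma> \<longrightarrow> y$v = 0) \<and> sum (\<lambda>v. y$v) UNIV = 1 \<and> (\<forall>v\<in>\<sigma>. 0 < y$v)}"
      using u(1) by (auto simp: yc less_imp_le)
  next
    fix y assume y: "y \<in> {y. (\<forall>v. 0 \<le> y$v) \<and> (\<forall>v. v \<notin> \<sigma> \<longrightarrow> y$v = (0::real)) \<and> sum (\<lambda>v. y$v) UNIV = 1 \<and> (\<forall>v\<in>\<sigma>. 0 < y$v)}"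
    define u where "u = (\<lambda>x::real^'n. x \<bullet> y)"
    have uax: "u (axis v 1) = y $ v" for v by (simp add: u_def inner_axis')
    have "(\<Sum>v\<in>\<sigma>. y $ v) = sum (\<lambda>v. y$v) UNIV"
      by (rule sum.mono_neutral_left) (use y in auto)
    moreover have "(\<Sum>v\<in>\<sigma>. y $ v *\<^sub>R (axis v 1 :: real^'n)) = y"
      using y sum_axis_comp[of "\<lambda>v. y $ v" \<sigma>] by (auto simp: vec_eq_iff)
    ultimately show "y \<in> rel_interior (convex hull ((\<lambda>v. axis v 1 :: real^'n) ` \<sigma>))"
      using y unfolding rel_interior_convex_hull_explicit[OF not_aff_dep]
      by (intro CollectI exI[of _ u]) (auto simp: eq uax)
  qed
qed

lemma aff_dim_simplex:
  "aff_dim (convex hull ((\<lambda>v. axis v 1 :: real^'n::finite) ` \<sigma>)) = int (card \<sigma>) - 1"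
proof -
  have inj: "inj_on (\<lambda>v. axis v 1 :: real^'n) \<sigma>"
    by (auto simp: inj_on_def axis_eq_axis)
  show ?thesis
    using aff_dim_affine_independent[OF not_aff_dep, of \<sigma>] card_image[OF inj]
    by (simp add: aff_dim_convex_hull)
qed

definition dc :: "'n set set \<Rightarrow> bool" where
  "dc M \<longleftrightarrow> (\<forall>\<sigma>\<in>M. \<forall>\<rho>. \<rho> \<subseteq> \<sigma> \<longrightarrow> \<rho> \<in> M)"

lemma real_char:
  fixes M :: "('n::finite) set set"
  assumes "dc M"
  shows "y \<in> realization M \<longleftrightarrow> (\<forall>v. 0 \<le> y$v) \<and> sum (\<lambda>v. y$v) UNIV = 1 \<and> {v. y$v \<noteq> 0} \<in> M"
proof
  assume "y \<in> realization M"
  then obtain \<sigma> where "\<sigma> \<in> M" "y \<in> convex hull ((\<lambda>v. axis v 1) ` \<sigma>)"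
    by (auto simp: realization_def)
  then have "(\<forall>v. 0 \<le> y$v) \<and> sum (\<lambda>v. y$v) UNIV = 1" "{v. y$v \<noteq> 0} \<subseteq> \<sigma>"
    unfolding hull_char by auto
  with \<open>\<sigma> \<in> M\<close> assms show "(\<forall>v. 0 \<le> y$v) \<and> sum (\<lambda>v. y$v) UNIV = 1 \<and> {v. y$v \<noteq> 0} \<in> M"
    unfolding dc_def by blast
next
  assume "(\<forall>v. 0 \<le> y$v) \<and> sum (\<lambda>v. y$v) UNIV = 1 \<and> {v. y$v \<noteq> 0} \<in> M"
  then show "y \<in> realization M"
    unfolding realization_def hull_char by (intro UN_I[of "{v. y$v \<noteq> 0}"]) auto
qed

lemma realization_mono: "M \<subseteq> N \<Longrightarrow> realization M \<subseteq> realization N"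
  by (auto simp: realization_def)

lemma closed_realization: "closed (realization (M :: ('n::finite) set set))"
  unfolding realization_def
  by (intro closed_UN ballI compact_imp_closed compact_convex_hull finite_imp_compact finite_imageI) simp_all

lemma dc_remove:
  fixes M :: "('n::finite) set set"
  assumes "dc M" "dc L" "\<tau> \<in> M - L" "\<And>\<sigma>. \<sigma> \<in> M - L \<Longrightarrow> card \<sigma> \<le> card \<tau>"
  shows "dc (M - {\<tau>})" and "\<And>\<sigma>. \<sigma> \<in> M \<Longrightarrow> \<tau> \<subseteq> \<sigma> \<Longrightarrow> \<sigma> = \<tau>"
proof -
  show *: "\<sigma> = \<tau>" if "\<sigma> \<in> M" "\<tau> \<subseteq> \<sigma>" for \<sigma>
  proof (rule ccontr)
    assume "\<sigma> \<noteq> \<tau>"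
    then have "\<tau> \<subset> \<sigma>" using that by auto
    then have "card \<tau> < card \<sigma>" by (simp add: psubset_card_mono)
    moreover have "\<sigma> \<notin> L" using assms(2,3) that unfolding dc_def by blast
    ultimately show False using assms(4) that by force
  qed
  show "dc (M - {\<tau>})"
    using assms(1) * unfolding dc_def by blast
qed

lemma homotopic_linear_rel:
  fixes f g :: "'a::real_normed_vector \<Rightarrow> 'b::real_normed_vector"
  assumes contf: "continuous_on S f" and contg: "continuous_on S g"
    and sub: "\<And>x t. x \<in> S \<Longrightarrow> 0 \<le> t \<Longrightarrow> t \<le> 1 \<Longrightarrow> (1 - t) *\<^sub>R f x + t *\<^sub>R g x \<in> U"
    and eqZ: "\<And>x. x \<in> Z \<Longrightarrow> g x = f x"
  shows "homotopic_with_canon (\<lambda>h. \<forall>z\<in>Z. h z = f z) S U f g"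
  unfolding homotopic_with_def
  apply (rule_tac x="\<lambda>y. ((1 - (fst y)) *\<^sub>R f(snd y) + (fst y) *\<^sub>R g(snd y))" in exI)
  using sub eqZ
  by (fastforce simp: algebra_simps intro: continuous_intros continuous_on_subset [OF contf] continuous_on_compose2 [where g=f]
            continuous_on_subset [OF contg] continuous_on_compose2 [where g=g])

lemma core:
  fixes P B Z :: "(real^'n::finite) set" and L :: "'n set set"
  assumes BP: "B \<subseteq> P" and cB: "compact B" and pP: "polytope P" and ZB: "Z \<subseteq> B" and dcL: "dc L"
  shows "\<And>M f. dc M \<Longrightarrow> L \<subseteq> M \<Longrightarrow> card (M - L) = n
     \<Longrightarrow> (\<And>\<tau>. \<tau> \<in> M - L \<Longrightarrow> aff_dim P < int (card \<tau>) - 1)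
     \<Longrightarrow> continuous_on B f \<Longrightarrow> f ` B \<subseteq> realization M \<Longrightarrow> f ` Z \<subseteq> realization L
     \<Longrightarrow> \<exists>g. g ` B \<subseteq> realization L \<and>
           homotopic_with_canon (\<lambda>h. \<forall>z\<in>Z. h z = f z) B (realization M) f g"
proof (induction n)
  case (0 M f)
  then have "M = L" by auto
  then show ?case using 0 by (intro exI[of _ f]) auto
next
  case (Suc n M f)
  have "M - L \<noteq> {}" using Suc.prems(3) by (metis card.empty Zero_not_Suc)
  then obtain \<tau> where \<tau>: "\<tau> \<in> M - L" "\<And>\<sigma>. \<sigma> \<in> M - L \<Longrightarrow> card \<sigma> \<le> card \<tau>"
  proof -
    have "finite (card ` (M - L))" "card ` (M - L) \<noteq> {}" using \<open>M - L \<noteq> {}\<close> by auto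
    then have "Max (card ` (M - L)) \<in> card ` (M - L)" by (rule Max_in)
    then obtain \<tau> where "\<tau> \<in> M - L" "card \<tau> = Max (card ` (M - L))" by auto
    then show ?thesis using that by auto
  qed
  define M' where "M' = M - {\<tau>}"
  have dcM': "dc M'" and maxt: "\<And>\<sigma>. \<sigma> \<in> M \<Longrightarrow> \<tau> \<subseteq> \<sigma> \<Longrightarrow> \<sigma> = \<tau>"
    using dc_remove[OF Suc.prems(1) dcL \<tau>] unfolding M'_def by auto
  have LM': "L \<subseteq> M'" using Suc.prems(2) \<tau> unfolding M'_def by auto
  have cardM': "card (M' - L) = n"
  proof -
    have "M' - L = (M - L) - {\<tau>}" unfolding M'_def by auto
    then show ?thesis using Suc.prems(3) \<tau>(1) by simp
  qed
  define T where "T = convex hull ((\<lambda>v. axis v 1 :: real^'n) ` \<tau>)"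
  have TM: "T \<subseteq> realization M" using \<tau> unfolding T_def realization_def by auto
  have cT: "compact T" and cvT: "convex T" unfolding T_def
    by (simp_all add: compact_convex_hull finite_imp_compact)
  have relint_disj: "y \<notin> realization M'" if "y \<in> rel_interior T" for y
  proof
    assume "y \<in> realization M'"
    then have "{v. y$v \<noteq> 0} \<in> M'" using real_char[OF dcM'] by blast
    moreover have "\<tau> \<subseteq> {v. y$v \<noteq> 0}" using that unfolding T_def relint_char by force
    ultimately show False using maxt unfolding M'_def by blast
  qed
  have cover: "y \<in> realization M'" if "y \<in> realization M" "y \<notin> rel_interior T" for y
  proof -
    have y: "\<forall>v. 0 \<le> y$v" "sum (\<lambda>v. y$v) UNIV = 1" "{v. y$v \<noteq> 0} \<in> M"
      using that(1) real_char[OF Suc.prems(1)] by blast+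
    have "{v. y$v \<noteq> 0} \<noteq> \<tau>"
    proof
      assume e: "{v. y$v \<noteq> 0} = \<tau>"
      have "\<forall>v\<in>\<tau>. 0 < y$v" using y(1) e by (force simp: order_le_less)
      then have "y \<in> rel_interior T" using y e unfolding T_def relint_char by auto
      then show False using that by blast
    qed
    then show ?thesis using y real_char[OF dcM'] unfolding M'_def by blast
  qed
  have LsubM': "realization L \<subseteq> realization M'" by (rule realization_mono[OF LM'])
  have M'subM: "realization M' \<subseteq> realization M" by (rule realization_mono) (auto simp: M'_def)
  have clT: "closure T = T" using cT by (simp add: compact_imp_closed)
  have rfT: "rel_frontier T \<subseteq> realization M'"
    using TM cover clT unfolding rel_frontier_def by blast
  have rfT2: "rel_frontier T \<subseteq> T" using clT unfolding rel_frontier_def by blast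
  have affT: "aff_dim P < aff_dim T"
    using Suc.prems(4)[OF \<tau>(1)] unfolding T_def aff_dim_simplex by simp
  define C where "C = B \<inter> f -` T"
  define S where "S = B \<inter> f -` realization M'"
  have clC: "closed C" unfolding C_def
    by (rule continuous_closed_preimage[OF Suc.prems(5) compact_imp_closed[OF cB] compact_imp_closed[OF cT]])
  have clS: "closed S" unfolding S_def
    by (rule continuous_closed_preimage[OF Suc.prems(5) compact_imp_closed[OF cB] closed_realization])
  have fW: "f \<in> (C \<inter> S) \<rightarrow> rel_frontier T"
    using relint_disj clT unfolding C_def S_def rel_frontier_def by auto
  obtain g0 where g0: "continuous_on (\<Union>{P}) g0" "g0 \<in> (\<Union>{P}) \<rightarrow> rel_frontier T"
      "\<And>x. x \<in> C \<inter> S \<Longrightarrow> g0 x = f x"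
  proof (rule extend_map_cell_complex_to_sphere[of "{P}" "C \<inter> S" T f])
    show "C \<inter> S \<subseteq> \<Union> {P}" using BP unfolding C_def by auto
    show "closed (C \<inter> S)" using clC clS by auto
    show "bounded T" using cT by (rule compact_imp_bounded)
    show "continuous_on (C \<inter> S) f" by (rule continuous_on_subset[OF Suc.prems(5)]) (auto simp: C_def)
    show "X \<inter> Y face_of X" if "X \<in> {P}" "Y \<in> {P}" for X Y
      using that pP by (simp add: face_of_refl polytope_imp_convex)
  qed (use cvT pP affT fW in auto)
  define g where "g x = (if x \<in> C then g0 x else f x)" for x
  have gS: "g x = f x" if "x \<in> S" for x using g0(3) that unfolding g_def by auto
  have BCS: "B = C \<union> S"
  proof -
    have "x \<in> C \<union> S" if "x \<in> B" for x
    proof (cases "f x \<in> rel_interior T")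
      case True then show ?thesis using that rel_interior_subset unfolding C_def by auto
    next
      case False then show ?thesis using that cover Suc.prems(6) unfolding S_def by auto
    qed
    then show ?thesis unfolding C_def S_def by auto
  qed
  have contg: "continuous_on B g"
  proof -
    have "continuous_on C g"
      by (rule continuous_on_eq[of C g0]) (use continuous_on_subset[OF g0(1), of C] BP in \<open>auto simp: g_def C_def\<close>)
    moreover have "continuous_on S g"
      by (rule continuous_on_eq[of S f]) (use continuous_on_subset[OF Suc.prems(5), of S] gS in \<open>auto simp: S_def\<close>)
    ultimately show ?thesis using BCS clC clS continuous_on_closed_Un by metis
  qed
  have gB: "g ` B \<subseteq> realization M'"
  proof
    fix y assume "y \<in> g ` B"
    then obtain x where x: "x \<in> B" "y = g x" by auto
    show "y \<in> realization M'"
    proof (cases "x \<in> C")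
      case True then show ?thesis using x g0(2) rfT BP unfolding g_def by auto
    next
      case False then have "x \<in> S" using BCS x by auto
      then show ?thesis using x gS unfolding S_def by auto
    qed
  qed
  have gZ: "g z = f z" if "z \<in> Z" for z
  proof -
    have "z \<in> S" using that ZB Suc.prems(7) LsubM' unfolding S_def by auto
    then show ?thesis by (rule gS)
  qed
  have hom1: "homotopic_with_canon (\<lambda>h. \<forall>z\<in>Z. h z = f z) B (realization M) f g"
  proof (rule homotopic_linear_rel[OF Suc.prems(5) contg])
    fix x and t :: real assume x: "x \<in> B" and t: "0 \<le> t" "t \<le> 1"
    show "(1 - t) *\<^sub>R f x + t *\<^sub>R g x \<in> realization M"
    proof (cases "x \<in> C")
      case True
      then have "f x \<in> T" "g x \<in> T" using g0(2) rfT2 BP x unfolding g_def C_def by auto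
      then show ?thesis using convexD_alt[OF cvT _ _ t] TM by blast
    next
      case False then have "x \<in> S" using BCS x by auto
      then have "g x = f x" by (rule gS)
      then show ?thesis using x Suc.prems(6) by (auto simp: algebra_simps)
    qed
  qed (rule gZ)
  obtain g' where g': "g' ` B \<subseteq> realization L"
      "homotopic_with_canon (\<lambda>h. \<forall>z\<in>Z. h z = g z) B (realization M') g g'"
  proof -
    have "\<exists>g'. g' ` B \<subseteq> realization L \<and>
           homotopic_with_canon (\<lambda>h. \<forall>z\<in>Z. h z = g z) B (realization M') g g'"
    proof (rule Suc.IH[OF dcM' LM' cardM' _ contg gB])
      show "aff_dim P < int (card \<sigma>) - 1" if "\<sigma> \<in> M' - L" for \<sigma>
        using Suc.prems(4) that unfolding M'_def by auto
      show "g ` Z \<subseteq> realization L" using gZ Suc.prems(7) by auto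
    qed
    then show ?thesis using that by blast
  qed
  have hom2: "homotopic_with_canon (\<lambda>h. \<forall>z\<in>Z. h z = f z) B (realization M) g g'"
    by (rule homotopic_with_subset_right[OF homotopic_with_mono[OF g'(2)] M'subM]) (use gZ in auto)
  show ?case using homotopic_with_trans[OF hom1 hom2] g'(1) by blast
qed

lemma continuous_map_scaleR_const:
  fixes c :: "'b::real_normed_vector"
  shows "continuous_map X euclideanreal g \<Longrightarrow> continuous_map X euclidean (\<lambda>x. g x *\<^sub>R c)"
  by (simp add: continuous_map_atin tendsto_scaleR)

lemma topspace_ndisc: "topspace (ndisc i) = {x. (\<forall>k\<ge>i. x k = 0) \<and> (\<Sum>k<i. (x k)^2) \<le> 1}"
  by (auto simp: ndisc_def topspace_Euclidean_space)

lemma topspace_nsphere_sub: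
  assumes "1 \<le> i" shows "topspace (nsphere (i - 1)) \<subseteq> topspace (ndisc i)"
proof -
  have e: "{..i - Suc 0} = {..<i}" using assms by auto
  show ?thesis using assms unfolding topspace_ndisc nsphere by (auto simp: e)
qed

lemma disc_base_in: "disc_base \<in> topspace (nsphere n)"
  using in_topspace_nsphere[of n] unfolding disc_base_def by simp

lemma ndisc_proj: "continuous_map (ndisc i) euclideanreal (\<lambda>x. x k)"
  unfolding ndisc_def Euclidean_space_def
  by (intro continuous_map_from_subtopology continuous_map_product_projection) simp

lemma sq_convex: "0 \<le> t \<Longrightarrow> t \<le> 1 \<Longrightarrow> ((1 - t) * a + t * b)^2 \<le> (1 - t) * a^2 + t * (b::real)^2"
proof -
  assume t: "0 \<le> t" "t \<le> 1"
  have "(1 - t) * a^2 + t * b^2 - ((1 - t) * a + t * b)^2 = t * (1 - t) * (a - b)^2"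
    by (simp add: power2_eq_square algebra_simps)
  moreover have "t * (1 - t) * (a - b)^2 \<ge> 0" using t by simp
  ultimately show ?thesis by linarith
qed

lemma disc_contract:
  assumes "1 \<le> i"
  shows "homotopic_with (\<lambda>h. h disc_base = disc_base \<and> h ` topspace (ndisc i) \<subseteq> topspace (ndisc i))
           (ndisc i) (ndisc i) id (\<lambda>_. disc_base)"
proof -
  define H where "H = (\<lambda>(t::real, x::nat\<Rightarrow>real). (\<lambda>k. (1 - t) * x k + t * disc_base k))"
  have bD: "disc_base \<in> topspace (ndisc i)"
    using topspace_nsphere_sub[OF assms] disc_base_in by blast
  have HD: "H (t, x) \<in> topspace (ndisc i)" if "x \<in> topspace (ndisc i)" "0 \<le> t" "t \<le> 1" for t x
  proof -
    have x: "\<forall>k\<ge>i. x k = 0" "(\<Sum>k<i. (x k)^2) \<le> 1" using that(1) unfolding topspace_ndisc by auto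
    have b: "\<forall>k\<ge>i. disc_base k = 0" "(\<Sum>k<i. (disc_base k)^2) \<le> 1" using bD unfolding topspace_ndisc by auto
    have "(\<Sum>k<i. (H (t,x) k)^2) \<le> (\<Sum>k<i. (1 - t) * (x k)^2 + t * (disc_base k)^2)"
      unfolding H_def by (intro sum_mono) (simp add: sq_convex that)
    also have "\<dots> = (1 - t) * (\<Sum>k<i. (x k)^2) + t * (\<Sum>k<i. (disc_base k)^2)"
      by (simp add: sum.distrib sum_distrib_left)
    also have "\<dots> \<le> (1 - t) * 1 + t * 1"
    proof (rule add_mono)
      show "(1 - t) * (\<Sum>k<i. (x k)^2) \<le> (1 - t) * 1" using x that by (intro mult_left_mono) auto
      show "t * (\<Sum>k<i. (disc_base k)^2) \<le> t * 1" using b that by (intro mult_left_mono) auto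
    qed
    finally show ?thesis using x b unfolding topspace_ndisc H_def by auto
  qed
  define D0 where "D0 = topspace (ndisc i)"
  have cont: "continuous_map (prod_topology (top_of_set {0..1}) (ndisc i)) (ndisc i) H"
  proof -
    have "continuous_map (prod_topology (top_of_set {0..1}) (ndisc i)) (powertop_real UNIV) H"
      unfolding continuous_map_componentwise_UNIV H_def
    proof
      fix k
      have c1: "continuous_map (prod_topology (top_of_set {0..1}) (ndisc i)) euclideanreal fst"
        using continuous_map_fst continuous_map_into_fulltopology by blast
      have c2: "continuous_map (prod_topology (top_of_set {0..1}) (ndisc i)) euclideanreal (\<lambda>p. snd p k)"
        using continuous_map_compose[OF continuous_map_snd ndisc_proj] by (simp add: o_def)
      show "continuous_map (prod_topology (top_of_set {0..1}) (ndisc i)) euclideanreal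
          (\<lambda>p. (case p of (t, x) \<Rightarrow> \<lambda>k. (1 - t) * x k + t * disc_base k) k)"
        using c1 c2 by (simp add: case_prod_unfold) (intro continuous_intros; assumption)
    qed
    moreover have "H ` topspace (prod_topology (top_of_set {0..1}) (ndisc i)) \<subseteq> topspace (ndisc i)"
      using HD by auto
    ultimately have hyp: "continuous_map (prod_topology (top_of_set {0..1}) (ndisc i)) (subtopology (powertop_real UNIV) D0) H"
      by (simp add: continuous_map_in_subtopology D0_def image_subset_iff_funcset)
    have eq: "ndisc i = subtopology (powertop_real UNIV) D0"
      unfolding D0_def ndisc_def Euclidean_space_def subtopology_subtopology by (simp add: Int_commute)
    show ?thesis using hyp by (simp only: eq)
  qed
  show ?thesis
    unfolding homotopic_with_def
  proof (intro exI[of _ H] conjI[OF cont] conjI[OF allI] ballI)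
    show "H (0, x) = id x" for x by (simp add: H_def)
    show "H (1, x) = disc_base" for x by (simp add: H_def)
    have Hb: "H (t, disc_base) = disc_base" for t by (simp add: H_def algebra_simps)
    fix t :: real assume "t \<in> {0..1}"
    then show "(\<lambda>x. H (t, x)) disc_base = disc_base \<and> (\<lambda>x. H (t, x)) ` topspace (ndisc i) \<subseteq> topspace (ndisc i)"
      using HD Hb by auto
  qed
qed

lemma embed:
  assumes "i \<le> CARD('n::finite)"
  obtains \<phi> :: "(nat \<Rightarrow> real) \<Rightarrow> real^'n" and \<psi> B P where
   "continuous_map (ndisc i) (top_of_set B) \<phi>" "continuous_map (top_of_set B) (ndisc i) \<psi>"
   "\<And>x. x \<in> topspace (ndisc i) \<Longrightarrow> \<psi> (\<phi> x) = x" "B \<subseteq> P" "compact B" "polytope P" "aff_dim P \<le> int i"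
proof -
  obtain h :: "nat \<Rightarrow> 'n" where h: "bij_betw h {0..<CARD('n)} UNIV"
    using ex_bij_betw_nat_finite[of "UNIV :: 'n set"] by auto
  define \<iota> where "\<iota> = h"
  have inj: "inj_on \<iota> {..<i}"
  proof -
    have "{..<i} \<subseteq> {0..<CARD('n)}" using assms by auto
    then show ?thesis using inj_on_subset[OF bij_betw_imp_inj_on[OF h]] unfolding \<iota>_def by blast
  qed
  define J where "J = \<iota> ` {..<i}"
  define \<phi> where "\<phi> = (\<lambda>x::nat\<Rightarrow>real. (\<Sum>k<i. x k *\<^sub>R axis (\<iota> k) 1) :: real^'n)"
  define \<psi> where "\<psi> = (\<lambda>y::real^'n. (\<lambda>k. if k < i then y $ \<iota> k else 0))"
  define c where "c = ((\<chi> v. if v \<in> J then 1 else 0) :: real^'n)"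
  define P where "P = cbox (-c) c"
  define B where "B = P \<inter> {y. (\<Sum>k<i. (y $ \<iota> k)^2) \<le> 1}"
  have phi_in: "\<phi> x $ \<iota> k = x k" if "k < i" for x k
  proof -
    have "\<phi> x $ \<iota> k = (\<Sum>j<i. if j = k then x j else 0)"
      unfolding \<phi>_def sum_component
      by (intro sum.cong refl) (use inj that in \<open>auto simp: axis_def inj_on_def\<close>)
    then show ?thesis using that by simp
  qed
  have phi_out: "\<phi> x $ v = 0" if "v \<notin> J" for x v
    unfolding \<phi>_def sum_component using that by (auto simp: axis_def J_def intro!: sum.neutral)
  have psiphi: "\<psi> (\<phi> x) = x" if "x \<in> topspace (ndisc i)" for x
    using that phi_in unfolding \<psi>_def topspace_ndisc by (auto simp: fun_eq_iff)
  have phiB: "\<phi> x \<in> B" if "x \<in> topspace (ndisc i)" for x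
  proof -
    have x: "\<forall>k\<ge>i. x k = 0" "(\<Sum>k<i. (x k)^2) \<le> 1" using that unfolding topspace_ndisc by auto
    have "\<bar>x k\<bar> \<le> 1" if "k < i" for k
    proof -
      have "(x k)^2 \<le> (\<Sum>k<i. (x k)^2)" by (rule member_le_sum) (use that in auto)
      then have "(x k)^2 \<le> 1^2" using x by simp
      then show ?thesis using abs_le_square_iff[of "x k" 1] by simp
    qed
    then have "\<phi> x \<in> P" unfolding P_def mem_box_cart c_def
      using phi_in phi_out by (auto simp: J_def abs_le_iff)
    moreover have "(\<Sum>k<i. (\<phi> x $ \<iota> k)^2) \<le> 1" using x phi_in by simp
    ultimately show ?thesis unfolding B_def by auto
  qed
  have psiD: "\<psi> y \<in> topspace (ndisc i)" if "y \<in> B" for y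
    using that unfolding B_def \<psi>_def topspace_ndisc by auto
  have c1: "continuous_map (ndisc i) (top_of_set B) \<phi>"
  proof -
    have "continuous_map (ndisc i) euclidean \<phi>"
      unfolding \<phi>_def by (intro continuous_map_sum continuous_map_scaleR_const ndisc_proj) auto
    then show ?thesis using phiB by (auto simp: continuous_map_in_subtopology)
  qed
  have c2: "continuous_map (top_of_set B) (ndisc i) \<psi>"
  proof -
    define D0 where "D0 = topspace (ndisc i)"
    have eq: "ndisc i = subtopology (powertop_real UNIV) D0"
      unfolding D0_def ndisc_def Euclidean_space_def subtopology_subtopology by (simp add: Int_commute)
    have "continuous_map (top_of_set B) (powertop_real UNIV) \<psi>"
      unfolding continuous_map_componentwise_UNIV
    proof
      fix k
      show "continuous_map (top_of_set B) euclideanreal (\<lambda>y. \<psi> y k)"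
      proof (cases "k < i")
        case True
        then show ?thesis unfolding \<psi>_def by (auto intro!: continuous_intros)
      next
        case False
        then show ?thesis unfolding \<psi>_def by auto
      qed
    qed
    then have "continuous_map (top_of_set B) (subtopology (powertop_real UNIV) D0) \<psi>"
      using psiD by (auto simp: continuous_map_in_subtopology D0_def)
    then show ?thesis by (simp only: eq)
  qed
  have compB: "compact B" unfolding B_def P_def
    by (intro compact_Int_closed compact_cbox closed_Collect_le continuous_intros)
  have affP: "aff_dim P \<le> int i"
  proof -
    define E where "E = (\<lambda>v. axis v 1 :: real^'n) ` J"
    have "P \<subseteq> span E"
    proof
      fix y assume "y \<in> P"
      then have y0: "y $ v = 0" if "v \<notin> J" for v
      proof -
        have "- (if v \<in> J then 1 else 0) \<le> y $ v \<and> y $ v \<le> (if v \<in> J then (1::real) else 0)"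
          using \<open>y \<in> P\<close> unfolding P_def mem_box_cart c_def by auto
        then show ?thesis using that by auto
      qed
      have "y = (\<Sum>v\<in>J. y $ v *\<^sub>R axis v 1)"
        using y0 sum_axis_comp[of "\<lambda>v. y $ v" J] by (auto simp: vec_eq_iff)
      also have "\<dots> \<in> span E"
        by (intro span_sum span_scale span_base) (auto simp: E_def)
      finally show "y \<in> span E" .
    qed
    then have "aff_dim P \<le> aff_dim (span E)" by (rule aff_dim_subset)
    also have "\<dots> = int (dim E)" by (simp add: aff_dim_subspace)
    also have "dim E \<le> card E" using dim_le_card[of E E] by (auto simp: E_def span_superset)
    also have "card E \<le> card J" unfolding E_def by (rule card_image_le) simp
    also have "card J \<le> i" unfolding J_def using card_image_le[of "{..<i}" \<iota>] by simp
    finally show ?thesis by simp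
  qed
  show ?thesis
    by (rule that[OF c1 c2 psiphi _ compB _ affP]) (auto simp: B_def P_def polytope_interval)
qed

lemma indep_fin: "finite {card S |S. S \<subseteq> (\<sigma>::('n::finite) set) \<and> indep_set E S}"
  by (rule finite_subset[of _ "card ` (UNIV :: 'n set set)"]) auto

lemma indep_ne: "{card S |S. S \<subseteq> \<sigma> \<and> indep_set E S} \<noteq> {}"
  by (auto simp: indep_set_def intro!: exI[of _ "{}"])

lemma indep_mono: "\<rho> \<subseteq> \<sigma> \<Longrightarrow> indep_number E \<rho> \<le> indep_number E (\<sigma>::('n::finite) set)"
  unfolding indep_number_def
  by (rule Max_mono[OF _ indep_ne indep_fin]) auto

lemma indep_le_card: "indep_number E (\<sigma>::('n::finite) set) \<le> card \<sigma>"
  unfolding indep_number_def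
  by (rule Max.boundedI[OF indep_fin indep_ne]) (auto intro: card_mono)

lemma dc_BI: "dc (BI d V (E :: ('n::finite) \<Rightarrow> _))"
  unfolding dc_def
proof (intro ballI allI impI)
  fix \<sigma> \<rho> assume "\<sigma> \<in> BI d V E" "\<rho> \<subseteq> \<sigma>"
  then show "\<rho> \<in> BI d V E" using indep_mono[of \<rho> \<sigma> E] unfolding BI_def by auto
qed

lemma BI_mono: "BI d V E \<subseteq> BI (d + 1) V E"
  unfolding BI_def by auto

theorem mainTheorem15:
  fixes V :: "('n::finite) set" and E :: "'n \<Rightarrow> 'n \<Rightarrow> bool" and d :: nat
  assumes "simple_graph V E" and "d \<ge> 2"
  shows "pair_connected (d - 2) (realization (BI (d + 1) V E)) (realization (BI d V E))"
proof -
  define K where "K = BI (d + 1) V E"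
  define L where "L = BI d V E"
  define X where "X = realization K"
  define A where "A = realization L"
  have dcK: "dc K" and dcL: "dc L" unfolding K_def L_def by (rule dc_BI)+
  have LK: "L \<subseteq> K" unfolding K_def L_def by (rule BI_mono)
  have AX: "A \<subseteq> X" unfolding A_def X_def by (rule realization_mono[OF LK])
  have pc: "\<exists>a\<in>A. path_component X x a" if xX: "x \<in> X" for x
  proof -
    obtain \<sigma> where \<sigma>: "\<sigma> \<in> K" "x \<in> convex hull ((\<lambda>v. axis v 1 :: real^'n) ` \<sigma>)"
      using xX unfolding X_def realization_def by auto
    have "\<sigma> \<noteq> {}" using \<sigma>(2) by auto
    then obtain v where v: "v \<in> \<sigma>" by blast
    have "{v} \<in> L"
      using \<sigma>(1) v indep_le_card[of E "{v}"] assms(2) unfolding K_def L_def BI_def by auto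
    have "axis v 1 \<in> convex hull ((\<lambda>v. axis v 1 :: real^'n) ` {v})" by simp
    then have aA: "axis v 1 \<in> A" using \<open>{v} \<in> L\<close> unfolding A_def realization_def by blast
    have sub: "convex hull ((\<lambda>v. axis v 1 :: real^'n) ` \<sigma>) \<subseteq> X"
      using \<sigma>(1) unfolding X_def realization_def by auto
    have "axis v 1 \<in> convex hull ((\<lambda>v. axis v 1 :: real^'n) ` \<sigma>)"
      using v by (intro hull_inc) auto
    then have "path_component (convex hull ((\<lambda>v. axis v 1 :: real^'n) ` \<sigma>)) x (axis v 1)"
      using \<sigma>(2) convex_imp_path_connected[OF convex_convex_hull] path_connected_component by blast
    then show ?thesis using aA path_component_mono[OF sub] by blast
  qed
  have rh: "rel_homotopy_trivial i X A x0" if i: "1 \<le> i" "i \<le> d - 2" and x0: "x0 \<in> A" for i x0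
    unfolding rel_homotopy_trivial_def
  proof (intro allI impI, elim conjE)
    fix f assume cf: "continuous_map (ndisc i) (top_of_set X) f"
      and fS: "f ` topspace (nsphere (i - 1)) \<subseteq> A" and fb: "f disc_base = x0"
    define Pr where "Pr = (\<lambda>h::(nat\<Rightarrow>real) \<Rightarrow> real^'n. h ` topspace (nsphere (i - 1)) \<subseteq> A \<and> h disc_base = x0)"
    have SD: "topspace (nsphere (i - 1)) \<subseteq> topspace (ndisc i)" by (rule topspace_nsphere_sub[OF i(1)])
    have bS: "disc_base \<in> topspace (nsphere (i - 1))" by (rule disc_base_in)
    obtain g where cg: "continuous_map (ndisc i) (top_of_set X) g"
      and gD: "g ` topspace (ndisc i) \<subseteq> A" and gb: "g disc_base = x0"
      and hom: "homotopic_with Pr (ndisc i) (top_of_set X) f g"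
    proof (cases "K - L = {}")
      case True
      then have "X \<subseteq> A" unfolding X_def A_def by (intro realization_mono) auto
      moreover have "f ` topspace (ndisc i) \<subseteq> X" using cf by (auto simp: continuous_map_def)
      ultimately have "f ` topspace (ndisc i) \<subseteq> A" by (rule order_trans[rotated])
      moreover have "homotopic_with Pr (ndisc i) (top_of_set X) f f"
        using cf fS fb by (simp add: Pr_def)
      ultimately show ?thesis by (rule that[OF cf _ fb])
    next
      case False
      then obtain \<tau> where \<tau>: "\<tau> \<in> K - L" by auto
      then have "d \<le> indep_number E \<tau>" unfolding K_def L_def BI_def by auto
      then have "d \<le> card \<tau>" using indep_le_card[of E \<tau>] by linarith
      moreover have "card \<tau> \<le> CARD('n)" by (rule card_mono) auto
      ultimately have iC: "i \<le> CARD('n)" using i by linarith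
      obtain \<phi> :: "(nat \<Rightarrow> real) \<Rightarrow> real^'n" and \<psi> B P where
        c1: "continuous_map (ndisc i) (top_of_set B) \<phi>" and c2: "continuous_map (top_of_set B) (ndisc i) \<psi>"
        and psiphi: "\<And>x. x \<in> topspace (ndisc i) \<Longrightarrow> \<psi> (\<phi> x) = x" and BP: "B \<subseteq> P"
        and cB: "compact B" and pP: "polytope P" and affP: "aff_dim P \<le> int i"
        by (rule embed[OF iC]) (rule that; assumption)
      define F where "F = f \<circ> \<psi>"
      have "continuous_map (top_of_set B) (top_of_set X) F"
        unfolding F_def by (rule continuous_map_compose[OF c2 cf])
      then have contF: "continuous_on B F" and FB: "F ` B \<subseteq> X"
        by (auto simp: image_subset_iff_funcset)
      define Z where "Z = \<phi> ` topspace (nsphere (i - 1))"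
      have phiD: "\<phi> x \<in> B" if "x \<in> topspace (ndisc i)" for x
        using c1 that by (auto simp: continuous_map_def)
      have ZB: "Z \<subseteq> B" unfolding Z_def using phiD SD by auto
      have Fphi: "F (\<phi> s) = f s" if "s \<in> topspace (ndisc i)" for s
        using psiphi that unfolding F_def by simp
      have FZ: "F ` Z \<subseteq> A" unfolding Z_def using Fphi SD fS by auto
      have "\<exists>G. G ` B \<subseteq> realization L \<and>
           homotopic_with_canon (\<lambda>h. \<forall>z\<in>Z. h z = F z) B (realization K) F G"
      proof (rule core[OF BP cB pP ZB dcL dcK LK refl])
        show "aff_dim P < int (card \<tau>') - 1" if "\<tau>' \<in> K - L" for \<tau>'
        proof -
          have "d \<le> indep_number E \<tau>'" using that unfolding K_def L_def BI_def by auto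
          then have "d \<le> card \<tau>'" using indep_le_card[of E \<tau>'] by linarith
          then show ?thesis using affP i assms(2) by linarith
        qed
        show "continuous_on B F" by (rule contF)
        show "F ` B \<subseteq> realization K" using FB unfolding X_def .
        show "F ` Z \<subseteq> realization L" using FZ unfolding A_def .
      qed
      then obtain G where GB: "G ` B \<subseteq> A"
        and homG: "homotopic_with_canon (\<lambda>h. \<forall>z\<in>Z. h z = F z) B X F G"
        unfolding A_def X_def by blast
      have hom2: "homotopic_with Pr (ndisc i) (top_of_set X) (F \<circ> \<phi>) (G \<circ> \<phi>)"
      proof (rule homotopic_with_compose_continuous_map_right[OF homG c1])
        fix j assume j: "\<forall>z\<in>Z. j z = F z"
        have e1: "(j \<circ> \<phi>) s = f s" if "s \<in> topspace (nsphere (i - 1))" for s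
        proof -
          have "\<phi> s \<in> Z" using that unfolding Z_def by blast
          then have "j (\<phi> s) = F (\<phi> s)" using j by blast
          also have "\<dots> = f s" using Fphi SD that by blast
          finally show ?thesis by simp
        qed
        have "(j \<circ> \<phi>) ` topspace (nsphere (i - 1)) = f ` topspace (nsphere (i - 1))"
          by (rule image_cong[OF refl e1])
        then show "Pr (j \<circ> \<phi>)" unfolding Pr_def using fS fb bS e1 by simp
      qed
      have hom1: "homotopic_with Pr (ndisc i) (top_of_set X) f (F \<circ> \<phi>)"
      proof (rule homotopic_with_equal[OF _ _ cf])
        show "Pr f" unfolding Pr_def using fS fb by auto
        show "f x = (F \<circ> \<phi>) x" if "x \<in> topspace (ndisc i)" for x using Fphi that by simp
        then have e1: "(F \<circ> \<phi>) s = f s" if "s \<in> topspace (nsphere (i - 1))" for s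
          using SD that by (metis subsetD)
        have "(F \<circ> \<phi>) ` topspace (nsphere (i - 1)) = f ` topspace (nsphere (i - 1))"
          by (rule image_cong[OF refl e1])
        then show "Pr (F \<circ> \<phi>)" unfolding Pr_def using fS fb bS e1 by simp
      qed
      have "continuous_map (ndisc i) (top_of_set X) (G \<circ> \<phi>)"
        using homotopic_with_imp_continuous_maps[OF hom2] by blast
      moreover have "(G \<circ> \<phi>) ` topspace (ndisc i) \<subseteq> A" using phiD GB by auto
      moreover have "(G \<circ> \<phi>) disc_base = x0"
        using homotopic_with_imp_property[OF hom2] unfolding Pr_def by blast
      ultimately show ?thesis by (rule that[OF _ _ _ homotopic_with_trans[OF hom1 hom2]])
    qed
    have "homotopic_with Pr (ndisc i) (top_of_set X) (g \<circ> id) (g \<circ> (\<lambda>_. disc_base))"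
    proof (rule homotopic_with_compose_continuous_map_left[OF disc_contract[OF i(1)] cg])
      fix j :: "(nat \<Rightarrow> real) \<Rightarrow> (nat \<Rightarrow> real)"
      assume j: "j disc_base = disc_base \<and> j ` topspace (ndisc i) \<subseteq> topspace (ndisc i)"
      show "Pr (g \<circ> j)" unfolding Pr_def using j gD gb SD by (auto simp: image_subset_iff)
    qed
    then have "homotopic_with Pr (ndisc i) (top_of_set X) g (\<lambda>_. x0)" by (simp add: o_def gb)
    then have "homotopic_with Pr (ndisc i) (top_of_set X) f (\<lambda>_. x0)"
      by (rule homotopic_with_trans[OF hom])
    then show "homotopic_with (\<lambda>h. h ` topspace (nsphere (i - 1)) \<subseteq> A \<and> h disc_base = x0)
          (ndisc i) (top_of_set X) f (\<lambda>_. x0)"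
      unfolding Pr_def .
  qed
  show ?thesis
    unfolding pair_connected_def X_def[symmetric] A_def[symmetric] K_def[symmetric] L_def[symmetric]
  proof (intro conjI AX ballI allI impI)
    show "\<exists>a\<in>A. path_component X x a" if "x \<in> X" for x using pc[OF that] .
    show "rel_homotopy_trivial i X A x0" if "1 \<le> i \<and> i \<le> d - 2" "x0 \<in> A" for i x0
      using rh that by blast
  qed
qed

end
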